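(* Let $a$ and $b$ be coprime odd integers and let $\beta$ be a positive integer such that $2^\beta\,\|\,(a+b)$. Then: 1) $G_{(a,b)}(\beta)\neq\emptyset$ and every element of $G_{(a,b)}(\beta)$ is odd; 2) $G_{(a,b)}(\beta+1)=\emptyset$.
   Context: For coprime nonzero integers $a,b$ and an integer $\beta\geq0$, $G_{(a,b)}(\beta)$ is the set of positive integers $d$ such that $2^\beta d\mid(a^k+b^k)$ for some positive integer $k$. $2^\beta\,\|\,m$ means $2^\beta\mid m$ and $2^{\beta+1}\nmid m$. *)

theory Defs
  imports Main
begin

definition G :: "int \<Rightarrow> int \<Rightarrow> nat \<Rightarrow> nat set" where
  "G a b \<beta> = {d :: nat. d > 0 \<and> (\<exists>k::nat. k > 0 \<and> (2::int) ^ \<beta> * int d dvd a ^ k + b ^ k)}"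

end

theory Submission
  imports Defs
begin

lemma sum_odd_parity:
  fixes f :: "nat \<Rightarrow> int"
  shows "(\<forall>i<k. odd (f i)) \<Longrightarrow> (even (\<Sum>i<k. f i) \<longleftrightarrow> even k)"
  by (induction k) auto
lemma C: fixes a b :: int
  assumes "odd a" and "odd b" 
    and "(2::int) ^ \<beta> dvd a + b" and "\<not> (2::int) ^ (\<beta> + 1) dvd a + b"
    and False: "odd k"
  shows "\<not> (2::int) ^ (\<beta> + 1) dvd a ^ k + b ^ k"
proof -
  define c where "c = -b"
  have eq: "a^k - c^k = (a - c) * (\<Sum>i<k. c^(k - Suc i) * a^i)"
    by (rule power_diff_sumr2)
  have ck: "c^k = - (b^k)" using False unfolding c_def by (simp add: power_minus_odd)
  define S where "S = (\<Sum>i<k. c^(k - Suc i) * a^i)"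
  have e2: "a^k + b^k = (a + b) * S" using eq ck unfolding c_def S_def by simp
  have oc: "odd c" using assms(2) unfolding c_def by simp
  have "\<forall>i<k. odd (c^(k - Suc i) * a^i)" using oc assms(1) by simp
  hence "odd S" unfolding S_def
    using sum_odd_parity[of k "\<lambda>i. c^(k - Suc i) * a^i"] False by blast
  obtain t where t: "a + b = 2^\<beta> * t" using assms(3) by blast
  have "odd t"
  proof
    assume "even t" then obtain u where "t = 2*u" by blast
    hence "a + b = 2^(\<beta>+1) * u" using t by simp
    thus False using assms(4) by (metis dvd_triv_left)
  qed
  have "a^k + b^k = 2^\<beta> * (t * S)" using e2 t by simp
  moreover have "odd (t*S)" using \<open>odd t\<close> \<open>odd S\<close> by simp
  ultimately show ?thesis
    by (metis mult_dvd_mono dvd_mult_cancel_left power_add power_one_right dvd_refl zero_neq_numeral power_not_zero) 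
qed
lemma A: fixes a b :: int assumes m: "k = 2*m" and pw: "\<And>x::int. odd x \<Longrightarrow> ((x^2)^m) mod 4 = 1"
  and "odd a" "odd b"
 shows "(a^k + b^k) mod 4 = 2"
  proof -
    have 1: "a^k = (a^2)^m" "b^k = (b^2)^m" using m by (simp_all only: power_mult)
    have "(a^k + b^k) mod 4 = ((a^2)^m mod 4 + (b^2)^m mod 4) mod 4"
      unfolding 1 by (rule mod_add_eq[symmetric])
    also have "\<dots> = 2" using pw[OF assms(3)] pw[OF assms(4)] by simp
    finally show ?thesis .
  qed
lemma B: "(4::int) dvd 2^(\<beta>+1)" if b0: "\<beta> > 0" for \<beta> :: nat
  proof -
    obtain j where j: "\<beta> = Suc j" using b0 by (cases \<beta>) auto
    have "(2::int)^(\<beta>+1) = 4 * 2^j" unfolding j by simp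
    thus ?thesis by simp
  qed
lemma sqmod: "x^2 mod 4 = 1" if "odd x" for x :: int
  proof -
    define y where "y = x div 2"
    have "x = 2*y+1" unfolding y_def using odd_two_times_div_two_succ[OF that] by simp
    hence "x^2 = 1 + 4*(y^2+y)" by (simp add: power2_eq_square algebra_simps)
    hence "x^2 mod 4 = (1 + 4*(y^2+y)) mod 4" by (simp only:)
    also have "\<dots> = 1 mod 4" by (rule mod_mult_self2)
    finally show ?thesis by simp
  qed
lemma pwmod: "((x^2)^m) mod 4 = 1" if "odd x" for x :: int
  proof -
    have "((x^2)^m) mod 4 = ((x^2 mod 4)^m) mod 4" by (simp add: power_mod)
    thus ?thesis using sqmod[OF that] by simp
  qed

lemma core:
  fixes a b :: int and \<beta> k :: nat
  assumes "odd a" and "odd b" and "\<beta> > 0"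
    and "(2::int) ^ \<beta> dvd a + b" and "\<not> (2::int) ^ (\<beta> + 1) dvd a + b"
    and "k > 0"
  shows "\<not> (2::int) ^ (\<beta> + 1) dvd a ^ k + b ^ k"
proof (cases "even k")
  case True
  then obtain m where m: "k = 2 * m" by blast
  have "(a^k + b^k) mod 4 = 2" using A[OF m pwmod assms(1,2)] by blast
  hence n4: "\<not> (4::int) dvd a^k + b^k" by (simp add: dvd_eq_mod_eq_0)
  show ?thesis using n4 B[OF assms(3)] dvd_trans by blast
next
  case False
  show ?thesis using C[OF assms(1,2,4,5)] False by blast
qed

theorem lemma2p14:
  fixes a b :: int and \<beta> :: nat
  assumes "coprime a b" and "odd a" and "odd b" and "\<beta> > 0"
    and "(2::int) ^ \<beta> dvd a + b" and "\<not> (2::int) ^ (\<beta> + 1) dvd a + b"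
  shows "G a b \<beta> \<noteq> {} \<and> (\<forall>d \<in> G a b \<beta>. odd d) \<and> G a b (\<beta> + 1) = {}"
proof (intro conjI)
  have "1 \<in> G a b \<beta>" unfolding G_def using assms(5)
    by (auto intro!: exI[of _ 1])
  thus "G a b \<beta> \<noteq> {}" by blast
  show "\<forall>d \<in> G a b \<beta>. odd d"
  proof
    fix d assume "d \<in> G a b \<beta>"
    then obtain k where k: "k > 0" "(2::int)^\<beta> * int d dvd a^k + b^k" unfolding G_def by auto
    show "odd d"
    proof
      assume "even d"
      then obtain e where "d = 2*e" by blast
      hence "(2::int)^(\<beta>+1) dvd 2^\<beta> * int d" by simp
      hence "(2::int)^(\<beta>+1) dvd a^k + b^k" using k(2) dvd_trans by blast
      thus False using core[OF assms(2-6) k(1)] by blast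
    qed
  qed
  show "G a b (\<beta>+1) = {}"
  proof (rule ccontr)
    assume "G a b (\<beta>+1) \<noteq> {}"
    then obtain d k where k: "k > 0" "(2::int)^(\<beta>+1) * int d dvd a^k + b^k" unfolding G_def by auto
    hence "(2::int)^(\<beta>+1) dvd a^k + b^k" using dvd_mult_left by blast
    thus False using core[OF assms(2-6) k(1)] by blast
  qed
qed

end
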